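(* Let $M$ be a Turing machine (bi-infinite tape, symbols $\{0,1,3\}$ with $0$ blank, states $\{0,\dots,|Q|-1\}$) computing a function $f:\Sigma^*\to\Sigma^*$, $\Sigma=\{1,3\}$, in time $T(\ell(\omega))$ on input $\omega$. One can construct a function $\tilde f:\mathbb N\times\mathbb R\to\mathbb R$ in $\mathbb{LDL}^\circ$ such that, for every input $\omega$, $\tilde f(2^{T(\ell(\omega))},\gamma_{word}(\omega))$ provides $f(\omega)$ with respect to the encoding $\gamma_{word}$, i.e. equals $\gamma_{word}(f(\omega))$.
   Context: For a word $w=w_0w_1\dots$ over $\{0,1,3\}$, $\gamma_{word}(w)=\sum_{i\ge0}w_i4^{-(i+1)}$. The input $\omega$ is initially written to the right of the head (left part blank) in the initial state, and the output is read as the tape content to the right of the head; halting configurations are fixed points of the step function. $\ell$ denotes length. $\overline{\mathrm{sg}}:\mathbb R\to\mathbb R$ is a fixed continuous piecewise affine function equal to $1$ for $x>3/4$ and $0$ for $x<1/4$. An $\overline{\mathrm{sg}}$-polynomial expression is built from $+,-,\times,\overline{\mathrm{sg}}$ over variables and integer constants; $\deg(x,x)=1$, $\deg(x,x')=0$ for other variables/constants, $\deg(x,P+Q)=\max$, $\deg(x,P\times Q)=$ sum, $\deg(x,\overline{\mathrm{sg}}(P))=0$; $\mathbf u$ is essentially linear in $\mathbf f$ if $\mathbf u=\mathbf A\cdot\mathbf f+\mathbf B$ with $\mathbf A,\mathbf B$ $\overline{\mathrm{sg}}$-polynomial expressions of degree $0$ in $\mathbf f$. Linear length ODE schema: $\mathbf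 f(0,\mathbf y)=\mathbf g(\mathbf y)$, $\mathbf f(x+1,\mathbf y)=\mathbf f(x,\mathbf y)+(\ell(x+1)-\ell(x))\,\mathbf u(\mathbf f(x,\mathbf y),\mathbf h(x,\mathbf y),x,\mathbf y)$ with $\mathbf u$ essentially linear in $\mathbf f(x,\mathbf y)$, where $\ell:\mathbb N\to\mathbb N$ is binary length. $\mathbb{LDL}^\circ$: smallest class of functions (arguments/values in $\mathbb N,\mathbb Z,\mathbb Q,\mathbb R$, composition partial) containing $0,1$, projections, $\ell$, $+,-,\times$ (over the reals), $\overline{\mathrm{sg}}$, $x\mapsto x/2$, closed under composition and linear length ODE. *)

theory Defs
  imports Complex_Main
begin

datatype move = MLeft | MStay | MRight

text \<open>A configuration: (left tape, state, right tape). The head reads right 0;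
  left 0 is the cell immediately to the left of the head.\<close>
type_synonym config = "(nat \<Rightarrow> nat) \<times> nat \<times> (nat \<Rightarrow> nat)"

text \<open>A machine is given by its number of states nQ (states 0..nQ-1, initial state 0)
  and its transition function delta : state => read symbol => (new state, written symbol, move).\<close>
definition tm_wf :: "nat \<Rightarrow> (nat \<Rightarrow> nat \<Rightarrow> nat \<times> nat \<times> move) \<Rightarrow> bool" where
  "tm_wf nQ delta \<longleftrightarrow> 0 < nQ \<and>
     (\<forall>q<nQ. \<forall>a\<in>{0,1,3}. fst (delta q a) < nQ \<and> fst (snd (delta q a)) \<in> {0,1,3})"

fun tm_step :: "(nat \<Rightarrow> nat \<Rightarrow> nat \<times> nat \<times> move) \<Rightarrow> config \<Rightarrow> config" where
  "tm_step delta (l, q, r) =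
     (case delta q (r 0) of (q', a, m) \<Rightarrow>
        (case m of
           MStay \<Rightarrow> (l, q', r(0 := a))
         | MRight \<Rightarrow> ((\<lambda>i. if i = 0 then a else l (i - 1)), q', (\<lambda>i. r (i + 1)))
         | MLeft \<Rightarrow> ((\<lambda>i. l (i + 1)), q', (\<lambda>i. if i = 0 then l 0 else (r(0 := a)) (i - 1)))))"

definition pad :: "nat list \<Rightarrow> nat \<Rightarrow> nat" where
  "pad w = (\<lambda>i. if i < length w then w ! i else 0)"

definition tm_init :: "nat list \<Rightarrow> config" where
  "tm_init w = ((\<lambda>_. 0), 0, pad w)"

definition is_word :: "nat list \<Rightarrow> bool" where
  "is_word w \<longleftrightarrow> set w \<subseteq> {1, 3}"

text \<open>M computes f in time T(length w): after T(length w) steps from the initial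
  configuration, the configuration is halting (a fixed point of the step function)
  and the tape content to the right of the head is f(w) (followed by blanks).\<close>
definition tm_computes ::
  "(nat \<Rightarrow> nat \<Rightarrow> nat \<times> nat \<times> move) \<Rightarrow> (nat list \<Rightarrow> nat list) \<Rightarrow> (nat \<Rightarrow> nat) \<Rightarrow> bool" where
  "tm_computes delta f T \<longleftrightarrow>
     (\<forall>w. is_word w \<longrightarrow>
        (let c = (tm_step delta ^^ T (length w)) (tm_init w) in
           tm_step delta c = c \<and> snd (snd c) = pad (f w) \<and> is_word (f w)))"

definition gamma_word :: "nat list \<Rightarrow> real" where
  "gamma_word w = (\<Sum>i<length w. real (w ! i) * (1/4) ^ (i + 1))"

text \<open>Binary length (with the convention that 0 is written "0", length 1).\<close>
fun blen :: "nat \<Rightarrow> nat" where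
  "blen n = (if n < 2 then 1 else Suc (blen (n div 2)))"

definition sgbar :: "real \<Rightarrow> real" where
  "sgbar x = min 1 (max 0 (2 * x - 1/2))"

datatype sexpr = SVar nat | SConst int | SAdd sexpr sexpr | SSub sexpr sexpr
  | SMul sexpr sexpr | SSg sexpr

fun seval :: "real list \<Rightarrow> sexpr \<Rightarrow> real" where
  "seval env (SVar i) = env ! i"
| "seval env (SConst c) = real_of_int c"
| "seval env (SAdd p q) = seval env p + seval env q"
| "seval env (SSub p q) = seval env p - seval env q"
| "seval env (SMul p q) = seval env p * seval env q"
| "seval env (SSg p) = sgbar (seval env p)"

fun svars :: "sexpr \<Rightarrow> nat set" where
  "svars (SVar i) = {i}"
| "svars (SConst c) = {}"
| "svars (SAdd p q) = svars p \<union> svars q"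
| "svars (SSub p q) = svars p \<union> svars q"
| "svars (SMul p q) = svars p \<union> svars q"
| "svars (SSg p) = svars p"

fun sdeg :: "nat set \<Rightarrow> sexpr \<Rightarrow> nat" where
  "sdeg F (SVar i) = (if i \<in> F then 1 else 0)"
| "sdeg F (SConst c) = 0"
| "sdeg F (SAdd p q) = max (sdeg F p) (sdeg F q)"
| "sdeg F (SSub p q) = max (sdeg F p) (sdeg F q)"
| "sdeg F (SMul p q) = sdeg F p + sdeg F q"
| "sdeg F (SSg p) = 0"

text \<open>u is essentially linear in the variables 0..<d (standing for f_0..f_(d-1)):
  u = A . f + B with A, B of degree 0 in f.\<close>
definition ess_linear :: "nat \<Rightarrow> sexpr \<Rightarrow> bool" where
  "ess_linear d u \<longleftrightarrow>
     (\<exists>A B. length A = d \<and> (\<forall>a\<in>set A. sdeg {..<d} a = 0) \<and> sdeg {..<d} B = 0 \<and>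
        (\<forall>env. seval env u = (\<Sum>j<d. seval env (A ! j) * env ! j) + seval env B))"

type_synonym pfun = "real list \<Rightarrow> real option"

definition is_nat_real :: "real \<Rightarrow> bool" where
  "is_nat_real x \<longleftrightarrow> x \<in> \<nat>"

text \<open>Vector solution of the linear length ODE, at natural time t and parameters ys.
  The expressions u are evaluated in the environment f(t,y) @ h(t,y) @ [t] @ y.\<close>
fun ode_vec :: "pfun list \<Rightarrow> pfun list \<Rightarrow> sexpr list \<Rightarrow> nat \<Rightarrow> real list \<Rightarrow> real list option" where
  "ode_vec gs hs us 0 ys = those (map (\<lambda>g. g ys) gs)"
| "ode_vec gs hs us (Suc t) ys =
     (case ode_vec gs hs us t ys of
        None \<Rightarrow> None
      | Some fv \<Rightarrow>
          (case those (map (\<lambda>h. h (real t # ys)) hs) of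
             None \<Rightarrow> None
           | Some hv \<Rightarrow>
               Some (map (\<lambda>i. fv ! i + (real (blen (Suc t)) - real (blen t)) *
                                seval (fv @ hv @ [real t] @ ys) (us ! i))
                         [0..<length gs])))"

definition ode_sol :: "pfun list \<Rightarrow> pfun list \<Rightarrow> sexpr list \<Rightarrow> nat \<Rightarrow> pfun" where
  "ode_sol gs hs us i xs =
     (if is_nat_real (hd xs) then map_option (\<lambda>v. v ! i) (ode_vec gs hs us (nat \<lfloor>hd xs\<rfloor>) (tl xs))
      else None)"

text \<open>LDL: pairs (arity, partial function).\<close>
inductive_set LDL :: "(nat \<times> pfun) set" where
  zero: "(0, \<lambda>xs. Some 0) \<in> LDL"
| one: "(0, \<lambda>xs. Some 1) \<in> LDL"
| proj: "i < n \<Longrightarrow> (n, \<lambda>xs. Some (xs ! i)) \<in> LDL"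
| len: "(1, \<lambda>xs. if is_nat_real (xs ! 0) then Some (real (blen (nat \<lfloor>xs ! 0\<rfloor>))) else None) \<in> LDL"
| add: "(2, \<lambda>xs. Some (xs ! 0 + xs ! 1)) \<in> LDL"
| sub: "(2, \<lambda>xs. Some (xs ! 0 - xs ! 1)) \<in> LDL"
| mul: "(2, \<lambda>xs. Some (xs ! 0 * xs ! 1)) \<in> LDL"
| sg: "(1, \<lambda>xs. Some (sgbar (xs ! 0))) \<in> LDL"
| half: "(1, \<lambda>xs. Some (xs ! 0 / 2)) \<in> LDL"
| comp: "\<lbrakk> (m, f) \<in> LDL; length gs = m; \<forall>g\<in>set gs. (n, g) \<in> LDL \<rbrakk>
         \<Longrightarrow> (n, \<lambda>xs. case those (map (\<lambda>g. g xs) gs) of None \<Rightarrow> None | Some vs \<Rightarrow> f vs) \<in> LDL"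
| ode: "\<lbrakk> 0 < length gs; \<forall>g\<in>set gs. (k, g) \<in> LDL; \<forall>h\<in>set hs. (Suc k, h) \<in> LDL;
          length us = length gs;
          \<forall>u\<in>set us. ess_linear (length gs) u \<and>
                      svars u \<subseteq> {..<length gs + length hs + 1 + k};
          i < length gs \<rbrakk>
         \<Longrightarrow> (Suc k, ode_sol gs hs us i) \<in> LDL"

end

theory Submission
  imports Defs
begin

declare blen.simps[simp del]

lemma blen_small: "n < 2 \<Longrightarrow> blen n = 1" by (subst blen.simps) auto
lemma blen_big: "n \<ge> 2 \<Longrightarrow> blen n = Suc (blen (n div 2))" by (subst blen.simps) auto
lemma blen_ge1: "blen n \<ge> 1" by (subst blen.simps) auto

lemma blen_pow: "blen (2^T) = Suc T"
  by (induction T) (auto simp: blen_small blen_big)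

lemma blen_Suc: "blen (Suc t) = blen t \<or> blen (Suc t) = Suc (blen t)"
proof (induction t rule: less_induct)
  case (less t)
  show ?case
  proof (cases "t < 2")
    case True
    then have "t = 0 \<or> t = 1" by auto
    then show ?thesis by (auto simp: blen_small blen_big)
  next
    case False
    then have t2: "t \<ge> 2" by simp
    have "Suc t div 2 = t div 2 \<or> Suc t div 2 = Suc (t div 2)" by presburger
    moreover have "t div 2 < t" using t2 by simp
    moreover have "blen (Suc t) = Suc (blen (Suc t div 2))" using t2 by (intro blen_big) simp
    moreover have "blen t = Suc (blen (t div 2))" using t2 by (intro blen_big) simp
    moreover have "blen (Suc (t div 2)) = blen (t div 2) \<or> blen (Suc (t div 2)) = Suc (blen (t div 2))"
      using less[of "t div 2"] t2 by simp
    ultimately show ?thesis by auto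
  qed
qed


lemma ode_vec_iter:
  assumes g0: "ode_vec gs hs us 0 ys = Some v0" and lv0: "length v0 = length gs"
    and hv: "\<And>t. those (map (\<lambda>h. h (real t # ys)) hs) = Some hv"
    and phi: "\<And>t fv. length fv = length gs \<Longrightarrow>
        map (\<lambda>i. fv ! i + seval (fv @ hv @ [real t] @ ys) (us ! i)) [0..<length gs] = Phi fv"
    and lphi: "\<And>fv. length fv = length gs \<Longrightarrow> length (Phi fv) = length gs"
  shows "ode_vec gs hs us t ys = Some ((Phi ^^ (blen t - 1)) v0) \<and> length ((Phi ^^ (blen t - 1)) v0) = length gs"
proof (induction t)
  case 0
  then show ?case using g0 lv0 by (simp add: blen_small)
next
  case (Suc t)
  define fv where "fv = (Phi ^^ (blen t - 1)) v0"
  have IH: "ode_vec gs hs us t ys = Some fv" "length fv = length gs" using Suc fv_def by auto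
  have b1: "blen t \<ge> 1" by (rule blen_ge1)
  from blen_Suc[of t] show ?case
  proof
    assume e: "blen (Suc t) = blen t"
    have "map (\<lambda>i. fv ! i + (real (blen (Suc t)) - real (blen t)) * seval (fv @ hv @ [real t] @ ys) (us ! i)) [0..<length gs] = fv"
      using IH(2) e by simp (metis map_nth)
    then show ?thesis using IH hv e unfolding fv_def by simp
  next
    assume e: "blen (Suc t) = Suc (blen t)"
    have "map (\<lambda>i. fv ! i + (real (blen (Suc t)) - real (blen t)) * seval (fv @ hv @ [real t] @ ys) (us ! i)) [0..<length gs] = Phi fv"
      using IH(2) e phi[of fv t] by simp
    moreover have "(Phi ^^ (blen (Suc t) - 1)) v0 = Phi fv"
    proof -
      have "blen (Suc t) - 1 = Suc (blen t - 1)" using e b1 by simp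
      then show ?thesis unfolding fv_def by simp
    qed
    ultimately show ?thesis using IH hv lphi by simp
  qed
qed

lemma el_deg0: "sdeg {..<d} e = 0 \<Longrightarrow> ess_linear d e"
  unfolding ess_linear_def
  by (rule exI[of _ "replicate d (SConst 0)"], rule exI[of _ e]) auto

lemma el_var: "j < d \<Longrightarrow> ess_linear d (SVar j)"
  unfolding ess_linear_def
proof (rule exI[of _ "map (\<lambda>i. SConst (if i = j then 1 else 0)) [0..<d]"], rule exI[of _ "SConst 0"], intro conjI allI)
  fix env assume "j < d"
  then show "seval env (SVar j) = (\<Sum>i<d. seval env (map (\<lambda>i. SConst (if i = j then 1 else 0)) [0..<d] ! i) * env ! i) + seval env (SConst 0)"
  proof -
    have "(\<Sum>i<d. seval env (map (\<lambda>i. SConst (if i = j then 1 else 0)) [0..<d] ! i) * env ! i)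
        = (\<Sum>i<d. if i = j then env ! i else 0)" by (rule sum.cong) auto
    then show ?thesis using \<open>j < d\<close> by simp
  qed
qed auto

lemma el_add: "ess_linear d a \<Longrightarrow> ess_linear d b \<Longrightarrow> ess_linear d (SAdd a b)"
  unfolding ess_linear_def
proof (elim exE conjE)
  fix Aa Ba Ab Bb
  assume a: "length Aa = d" "\<forall>x\<in>set Aa. sdeg {..<d} x = 0" "sdeg {..<d} Ba = 0"
    "\<forall>env. seval env a = (\<Sum>j<d. seval env (Aa ! j) * env ! j) + seval env Ba"
  assume b: "length Ab = d" "\<forall>x\<in>set Ab. sdeg {..<d} x = 0" "sdeg {..<d} Bb = 0"
    "\<forall>env. seval env b = (\<Sum>j<d. seval env (Ab ! j) * env ! j) + seval env Bb"
  show "\<exists>A B. length A = d \<and> (\<forall>x\<in>set A. sdeg {..<d} x = 0) \<and> sdeg {..<d} B = 0 \<and>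
        (\<forall>env. seval env (SAdd a b) = (\<Sum>j<d. seval env (A ! j) * env ! j) + seval env B)"
    apply (rule exI[of _ "map (\<lambda>j. SAdd (Aa ! j) (Ab ! j)) [0..<d]"], rule exI[of _ "SAdd Ba Bb"])
    using a b by (auto simp: algebra_simps sum.distrib)
qed

lemma el_sub: "ess_linear d a \<Longrightarrow> ess_linear d b \<Longrightarrow> ess_linear d (SSub a b)"
  unfolding ess_linear_def
proof (elim exE conjE)
  fix Aa Ba Ab Bb
  assume a: "length Aa = d" "\<forall>x\<in>set Aa. sdeg {..<d} x = 0" "sdeg {..<d} Ba = 0"
    "\<forall>env. seval env a = (\<Sum>j<d. seval env (Aa ! j) * env ! j) + seval env Ba"
  assume b: "length Ab = d" "\<forall>x\<in>set Ab. sdeg {..<d} x = 0" "sdeg {..<d} Bb = 0"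
    "\<forall>env. seval env b = (\<Sum>j<d. seval env (Ab ! j) * env ! j) + seval env Bb"
  show "\<exists>A B. length A = d \<and> (\<forall>x\<in>set A. sdeg {..<d} x = 0) \<and> sdeg {..<d} B = 0 \<and>
        (\<forall>env. seval env (SSub a b) = (\<Sum>j<d. seval env (A ! j) * env ! j) + seval env B)"
    apply (rule exI[of _ "map (\<lambda>j. SSub (Aa ! j) (Ab ! j)) [0..<d]"], rule exI[of _ "SSub Ba Bb"])
    using a b by (auto simp: algebra_simps sum_subtractf)
qed

lemma el_mul: "sdeg {..<d} c = 0 \<Longrightarrow> ess_linear d a \<Longrightarrow> ess_linear d (SMul c a) \<and> ess_linear d (SMul a c)"
  unfolding ess_linear_def
proof (elim exE conjE)
  fix Aa Ba
  assume c: "sdeg {..<d} c = 0"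
  assume a: "length Aa = d" "\<forall>x\<in>set Aa. sdeg {..<d} x = 0" "sdeg {..<d} Ba = 0"
    "\<forall>env. seval env a = (\<Sum>j<d. seval env (Aa ! j) * env ! j) + seval env Ba"
  show "(\<exists>A B. length A = d \<and> (\<forall>x\<in>set A. sdeg {..<d} x = 0) \<and> sdeg {..<d} B = 0 \<and>
        (\<forall>env. seval env (SMul c a) = (\<Sum>j<d. seval env (A ! j) * env ! j) + seval env B)) \<and>
        (\<exists>A B. length A = d \<and> (\<forall>x\<in>set A. sdeg {..<d} x = 0) \<and> sdeg {..<d} B = 0 \<and>
        (\<forall>env. seval env (SMul a c) = (\<Sum>j<d. seval env (A ! j) * env ! j) + seval env B))"
    apply (intro conjI)
    apply (rule exI[of _ "map (\<lambda>j. SMul c (Aa ! j)) [0..<d]"], rule exI[of _ "SMul c Ba"])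
    using a c apply (auto simp: algebra_simps sum_distrib_left)[1]
    apply (rule exI[of _ "map (\<lambda>j. SMul c (Aa ! j)) [0..<d]"], rule exI[of _ "SMul c Ba"])
    using a c by (auto simp: algebra_simps sum_distrib_left)
qed

lemma deg1_el: "sdeg {..<d} e \<le> 1 \<Longrightarrow> ess_linear d e"
proof (induction e)
  case (SVar j) then show ?case by (cases "j < d") (auto intro: el_var el_deg0)
next
  case (SConst c) then show ?case by (auto intro: el_deg0)
next
  case (SAdd p q) then show ?case by (auto intro: el_add)
next
  case (SSub p q) then show ?case by (auto intro: el_sub)
next
  case (SMul p q)
  then have "sdeg {..<d} p = 0 \<and> sdeg {..<d} q \<le> 1 \<or> sdeg {..<d} q = 0 \<and> sdeg {..<d} p \<le> 1" by auto
  then show ?case using SMul el_mul by blast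
next
  case (SSg p) then show ?case by (auto intro: el_deg0)
qed

lemma seval_cong: "(\<forall>i\<in>svars e. env ! i = env' ! i) \<Longrightarrow> seval env e = seval env' e"
  by (induction e) auto


definition e8 :: "nat \<Rightarrow> nat" where "e8 a = (if a = 0 then 2 else if a = 1 then 4 else 6)"

fun enc8 :: "nat list \<Rightarrow> real" where
  "enc8 [] = 0" | "enc8 (x # xs) = (real (e8 x) + enc8 xs) / 8"

lemma enc8_bounds: "0 \<le> enc8 xs \<and> enc8 xs < 1"
  by (induction xs) (auto simp: e8_def)

lemma gamma_Nil: "gamma_word [] = 0" by (simp add: gamma_word_def)

lemma gamma_Cons: "gamma_word (x # xs) = (real x + gamma_word xs) / 4"
proof -
  have "gamma_word (x # xs) = real x * (1/4) + (\<Sum>i<length xs. real (xs ! i) * (1/4) ^ (Suc i + 1))"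
    unfolding gamma_word_def length_Cons sum.lessThan_Suc_shift by simp
  also have "(\<Sum>i<length xs. real (xs ! i) * (1/4) ^ (Suc i + 1)) = gamma_word xs / 4"
    unfolding gamma_word_def by (simp add: sum_divide_distrib)
  finally show ?thesis by simp
qed

lemma gamma_bounds: "set u \<subseteq> {0,1,3} \<Longrightarrow> 0 \<le> gamma_word u \<and> gamma_word u < 1"
  by (induction u) (auto simp: gamma_Nil gamma_Cons)

lemma gamma_append: "gamma_word (xs @ ys) = gamma_word xs + (1/4) ^ length xs * gamma_word ys"
  by (induction xs) (auto simp: gamma_Nil gamma_Cons algebra_simps)

lemma gamma_pad_sum: "length xs \<le> N \<Longrightarrow> gamma_word xs = (\<Sum>i<N. real (pad xs i) * (1/4) ^ (i + 1))"
proof -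
  assume N: "length xs \<le> N"
  have "gamma_word xs = (\<Sum>i<length xs. real (pad xs i) * (1/4) ^ (i + 1))"
    unfolding gamma_word_def pad_def by (rule sum.cong) auto
  also have "\<dots> = (\<Sum>i<N. real (pad xs i) * (1/4) ^ (i + 1))"
    using N by (intro sum.mono_neutral_left) (auto simp: pad_def)
  finally show ?thesis .
qed

lemma gamma_pad: "pad xs = pad ys \<Longrightarrow> gamma_word xs = gamma_word ys"
  using gamma_pad_sum[of xs "max (length xs) (length ys)"] gamma_pad_sum[of ys "max (length xs) (length ys)"]
  by simp

lemma sg0: "x \<le> 1/4 \<Longrightarrow> sgbar x = 0" by (simp add: sgbar_def)
lemma sg1: "x \<ge> 3/4 \<Longrightarrow> sgbar x = 1" by (simp add: sgbar_def)

definition nz8 :: "real \<Rightarrow> real" where "nz8 v = sgbar (8 * v)"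
definition dig8 :: "real \<Rightarrow> real" where
  "dig8 v = 2 * (sgbar (8 * v) + sgbar (8 * v - 3) + sgbar (8 * v - 5))"
definition sym8 :: "real \<Rightarrow> real" where "sym8 v = sgbar (8 * v - 3) + 2 * sgbar (8 * v - 5)"
definition sym4 :: "real \<Rightarrow> real" where "sym4 r = sgbar (4 * r) + 2 * sgbar (4 * r - 2)"

lemma zero_digs: "nz8 0 = 0" "dig8 0 = 0" "sym8 0 = 0" "sym4 0 = 0"
  by (simp_all add: nz8_def dig8_def sym8_def sym4_def sg0)

lemma enc8_digs:
  assumes "x \<in> {0,1,3}"
  shows "nz8 (enc8 (x # xs)) = 1" "dig8 (enc8 (x # xs)) = real (e8 x)" "sym8 (enc8 (x # xs)) = real x"
proof -
  have b: "0 \<le> enc8 xs" "enc8 xs < 1" using enc8_bounds[of xs] by auto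
  have v: "8 * enc8 (x # xs) = real (e8 x) + enc8 xs" by simp
  show "nz8 (enc8 (x # xs)) = 1" unfolding nz8_def v using b by (intro sg1) (auto simp: e8_def)
  show "dig8 (enc8 (x # xs)) = real (e8 x)" unfolding dig8_def v using b assms
    by (auto simp: e8_def sg0 sg1)
  show "sym8 (enc8 (x # xs)) = real x" unfolding sym8_def v using b assms
    by (auto simp: e8_def sg0 sg1)
qed

lemmas enc8_digs' = enc8_digs[simplified]

lemma gamma_digs:
  assumes "y \<in> {1,3}" "set ys \<subseteq> {0,1,3}"
  shows "sym4 (gamma_word (y # ys)) = real y"
proof -
  have b: "0 \<le> gamma_word ys" "gamma_word ys < 1" using gamma_bounds[OF assms(2)] by auto
  have v: "4 * gamma_word (y # ys) = real y + gamma_word ys" by (simp add: gamma_Cons)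
  show ?thesis unfolding sym4_def v using b assms by (auto simp: sg0 sg1)
qed


definition nz8E :: "sexpr \<Rightarrow> sexpr" where "nz8E e = SSg (SMul (SConst 8) e)"
definition dig8E :: "sexpr \<Rightarrow> sexpr" where
  "dig8E e = SMul (SConst 2) (SAdd (SAdd (SSg (SMul (SConst 8) e)) (SSg (SSub (SMul (SConst 8) e) (SConst 3))))
                (SSg (SSub (SMul (SConst 8) e) (SConst 5))))"
definition sym8E :: "sexpr \<Rightarrow> sexpr" where
  "sym8E e = SAdd (SSg (SSub (SMul (SConst 8) e) (SConst 3))) (SMul (SConst 2) (SSg (SSub (SMul (SConst 8) e) (SConst 5))))"
definition sym4E :: "sexpr \<Rightarrow> sexpr" where
  "sym4E e = SAdd (SSg (SMul (SConst 4) e)) (SMul (SConst 2) (SSg (SSub (SMul (SConst 4) e) (SConst 2))))"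

lemma seval_digE[simp]:
  "seval env (nz8E e) = nz8 (seval env e)" "seval env (dig8E e) = dig8 (seval env e)"
  "seval env (sym8E e) = sym8 (seval env e)" "seval env (sym4E e) = sym4 (seval env e)"
  by (simp_all add: nz8E_def nz8_def dig8E_def dig8_def sym8E_def sym8_def sym4E_def sym4_def)

lemma sdeg_digE[simp]:
  "sdeg F (nz8E e) = 0" "sdeg F (dig8E e) = 0" "sdeg F (sym8E e) = 0" "sdeg F (sym4E e) = 0"
  by (simp_all add: nz8E_def dig8E_def sym8E_def sym4E_def)

lemma svars_digE[simp]:
  "svars (nz8E e) = svars e" "svars (dig8E e) = svars e" "svars (sym8E e) = svars e" "svars (sym4E e) = svars e"
  by (auto simp: nz8E_def dig8E_def sym8E_def sym4E_def)

fun ssum :: "sexpr list \<Rightarrow> sexpr" where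
  "ssum [] = SConst 0" | "ssum (e # es) = SAdd e (ssum es)"

lemma seval_ssum: "seval env (ssum es) = sum_list (map (seval env) es)"
  by (induction es) auto
lemma svars_ssum: "svars (ssum es) = (\<Union>e\<in>set es. svars e)"
  by (induction es) auto
lemma sdeg_ssum: "(\<forall>e\<in>set es. sdeg F e \<le> k) \<Longrightarrow> sdeg F (ssum es) \<le> k"
  by (induction es) auto

definition readE :: sexpr where
  "readE = SAdd (SMul (nz8E (SVar 2)) (sym8E (SVar 2))) (SMul (SSub (SConst 1) (nz8E (SVar 2))) (sym4E (SVar 3)))"
definition QE :: "nat \<Rightarrow> sexpr" where
  "QE j = SSub (SSg (SAdd (SSub (SVar 0) (SConst (int j))) (SConst 1))) (SSg (SSub (SVar 0) (SConst (int j))))"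
definition S0E :: sexpr where "S0E = SSub (SConst 1) (SSg readE)"
definition S1E :: sexpr where "S1E = SSub (SSg readE) (SSg (SSub readE (SConst 2)))"
definition S3E :: sexpr where "S3E = SSg (SSub readE (SConst 2))"

definition tabE :: "nat \<Rightarrow> (nat \<Rightarrow> nat \<Rightarrow> sexpr) \<Rightarrow> sexpr" where
  "tabE nQ X = ssum (map (\<lambda>j. SMul (QE j) (SAdd (SAdd (SMul S0E (X j 0)) (SMul S1E (X j 1))) (SMul S3E (X j 3)))) [0..<nQ])"

lemma QE_eval: "env ! 0 = real j \<Longrightarrow> seval env (QE j') = (if j' = j then 1 else 0)"
proof -
  assume e: "env ! 0 = real j"
  consider "j' = j" | "j' < j" | "j < j'" by linarith
  then show ?thesis
  proof cases
    case 1 then show ?thesis using e by (simp add: QE_def sg0 sg1)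
  next
    case 2
    then have "real j - real j' \<ge> 1" by simp
    then show ?thesis using e 2 by (simp add: QE_def sg0 sg1)
  next
    case 3
    then have "real j' - real j \<ge> 1" by simp
    then show ?thesis using e 3 by (simp add: QE_def sg0 sg1)
  qed
qed

lemma tab_eval:
  assumes "env ! 0 = real j" "j < nQ" "seval env readE = real \<sigma>" "\<sigma> \<in> {0,1,3}"
  shows "seval env (tabE nQ X) = seval env (X j \<sigma>)"
proof -
  have S: "seval env S0E * seval env (X j' 0) + seval env S1E * seval env (X j' 1) + seval env S3E * seval env (X j' 3)
     = seval env (X j' \<sigma>)" for j'
    using assms(3,4) by (auto simp: S0E_def S1E_def S3E_def sg0 sg1)
  have "seval env (tabE nQ X) = (\<Sum>j'\<in>{0..<nQ}. (if j' = j then 1 else 0) * seval env (X j' \<sigma>))"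
    unfolding tabE_def seval_ssum
    by (simp add: sum_list_distinct_conv_sum_set QE_eval[OF assms(1)] S[symmetric] algebra_simps del: of_nat_Suc)
  also have "\<dots> = (\<Sum>j'\<in>{0..<nQ}. if j' = j then seval env (X j' \<sigma>) else 0)"
    by (rule sum.cong) auto
  also have "\<dots> = seval env (X j \<sigma>)" using assms(2) by simp
  finally show ?thesis .
qed

lemma tab_deg: "(\<And>j \<sigma>. sdeg F (X j \<sigma>) \<le> 1) \<Longrightarrow> sdeg F (tabE nQ X) \<le> 1"
  unfolding tabE_def
  by (rule sdeg_ssum) (auto simp: QE_def S0E_def S1E_def S3E_def readE_def max_def)

lemma tab_vars: "(\<And>j \<sigma>. svars (X j \<sigma>) \<subseteq> {..<5}) \<Longrightarrow> svars (tabE nQ X) \<subseteq> {..<5}"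
  unfolding tabE_def svars_ssum
  by (auto simp: QE_def S0E_def S1E_def S3E_def readE_def; blast)


definition V1E :: "nat \<Rightarrow> sexpr" where
  "V1E a = SAdd (SSub (SVar 2) (SMul (SMul (nz8E (SVar 2)) (dig8E (SVar 2))) (SVar 4))) (SMul (SConst (int (e8 a))) (SVar 4))"
definition eLE :: sexpr where
  "eLE = SAdd (dig8E (SVar 1)) (SMul (SConst 2) (SSub (SConst 1) (nz8E (SVar 1))))"

fun LnewE :: "move \<Rightarrow> nat \<Rightarrow> sexpr" where
  "LnewE MStay a = SVar 1"
| "LnewE MRight a = SAdd (SMul (SVar 1) (SVar 4)) (SMul (SConst (int (e8 a))) (SVar 4))"
| "LnewE MLeft a = SSub (SMul (SConst 8) (SVar 1)) (dig8E (SVar 1))"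

fun VnewE :: "move \<Rightarrow> nat \<Rightarrow> sexpr" where
  "VnewE MStay a = V1E a"
| "VnewE MRight a = SSub (SMul (SConst 8) (V1E a)) (SConst (int (e8 a)))"
| "VnewE MLeft a = SAdd (SMul (V1E a) (SVar 4)) (SMul eLE (SVar 4))"

definition RnewE :: sexpr where
  "RnewE = SAdd (SVar 3) (SMul (SSub (SConst 1) (nz8E (SVar 2))) (SSub (SMul (SConst 3) (SVar 3)) (sym4E (SVar 3))))"

definition NE1 :: "nat \<Rightarrow> (nat \<Rightarrow> nat \<Rightarrow> nat \<times> nat \<times> move) \<Rightarrow> sexpr list" where
  "NE1 nQ delta = [tabE nQ (\<lambda>j \<sigma>. SConst (int (fst (delta j \<sigma>)))),
     tabE nQ (\<lambda>j \<sigma>. LnewE (snd (snd (delta j \<sigma>))) (fst (snd (delta j \<sigma>)))),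
     tabE nQ (\<lambda>j \<sigma>. VnewE (snd (snd (delta j \<sigma>))) (fst (snd (delta j \<sigma>)))),
     RnewE]"

lemma LnewE_deg: "sdeg {..<4} (LnewE m a) \<le> 1" by (cases m) auto
lemma VnewE_deg: "sdeg {..<4} (VnewE m a) \<le> 1" by (cases m) (auto simp: V1E_def eLE_def)
lemma LnewE_vars: "svars (LnewE m a) \<subseteq> {..<5}" by (cases m) auto
lemma VnewE_vars: "svars (VnewE m a) \<subseteq> {..<5}" by (cases m) (auto simp: V1E_def eLE_def)

lemma NE1_deg: "\<forall>e\<in>set (NE1 nQ delta). sdeg {..<4} e \<le> 1"
proof -
  have "sdeg {..<4} (tabE nQ (\<lambda>j \<sigma>. SConst (int (fst (delta j \<sigma>))))) \<le> 1" by (rule tab_deg) simp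
  moreover have "sdeg {..<4} (tabE nQ (\<lambda>j \<sigma>. LnewE (snd (snd (delta j \<sigma>))) (fst (snd (delta j \<sigma>))))) \<le> 1"
    by (rule tab_deg) (rule LnewE_deg)
  moreover have "sdeg {..<4} (tabE nQ (\<lambda>j \<sigma>. VnewE (snd (snd (delta j \<sigma>))) (fst (snd (delta j \<sigma>))))) \<le> 1"
    by (rule tab_deg) (rule VnewE_deg)
  ultimately show ?thesis unfolding NE1_def RnewE_def by auto
qed
lemma NE1_vars: "\<forall>e\<in>set (NE1 nQ delta). svars e \<subseteq> {..<5}"
  by (auto simp: NE1_def RnewE_def intro!: tab_vars LnewE_vars VnewE_vars)
lemma NE1_len: "length (NE1 nQ delta) = 4" by (simp add: NE1_def)

definition mkU :: "sexpr list \<Rightarrow> sexpr list" where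
  "mkU NE = map (\<lambda>i. SSub (NE ! i) (SVar i)) [0..<length NE]"
definition PhiOf :: "sexpr list \<Rightarrow> real \<Rightarrow> real list \<Rightarrow> real list" where
  "PhiOf NE c fv = map (\<lambda>i. seval (fv @ [c]) (NE ! i)) [0..<length NE]"

lemma phi_generic:
  assumes "\<forall>e\<in>set NE. svars e \<subseteq> {..<Suc (length NE)}" "length fv = length NE"
  shows "map (\<lambda>i. fv ! i + seval (fv @ [c] @ [real t] @ ys) (mkU NE ! i)) [0..<length NE] = PhiOf NE c fv"
  unfolding PhiOf_def
proof (rule map_cong[OF refl])
  fix i assume "i \<in> set [0..<length NE]"
  then have i: "i < length NE" by simp
  have "seval (fv @ [c] @ [real t] @ ys) (NE ! i) = seval (fv @ [c]) (NE ! i)"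
  proof (rule seval_cong, intro ballI)
    fix v assume "v \<in> svars (NE ! i)"
    then have "v < Suc (length fv)" using assms i nth_mem by fastforce
    then show "(fv @ [c] @ [real t] @ ys) ! v = (fv @ [c]) ! v"
      by (cases "v < length fv") (auto simp: nth_append)
  qed
  then show "fv ! i + seval (fv @ [c] @ [real t] @ ys) (mkU NE ! i) = seval (fv @ [c]) (NE ! i)"
    using i assms(2) by (simp add: mkU_def nth_append)
qed

lemma mkU_el: "\<forall>e\<in>set NE. sdeg {..<length NE} e \<le> 1 \<Longrightarrow> \<forall>u\<in>set (mkU NE). ess_linear (length NE) u"
  by (auto simp: mkU_def intro!: deg1_el)

lemma mkU_vars: "\<forall>e\<in>set NE. svars e \<subseteq> S \<Longrightarrow> {..<length NE} \<subseteq> S \<Longrightarrow> \<forall>u\<in>set (mkU NE). svars u \<subseteq> S"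
  by (auto simp: mkU_def)


lemma pad_Nil: "pad [] = (\<lambda>i. 0)" by (simp add: pad_def fun_eq_iff)
lemma pad_Cons: "pad (x # xs) = (\<lambda>i. if i = 0 then x else pad xs (i - 1))"
  by (auto simp: pad_def fun_eq_iff nth_Cons split: nat.split)
lemma pad_shift: "(\<lambda>i. pad xs (i + 1)) = pad (tl xs)"
  by (cases xs) (auto simp: pad_Cons pad_Nil)

definition rep :: "nat \<Rightarrow> nat \<Rightarrow> config \<Rightarrow> real list \<Rightarrow> bool" where
  "rep nQ k c fv \<longleftrightarrow> (\<exists>ls vs u. fst c = pad ls \<and> snd (snd c) = pad (vs @ u) \<and> fst (snd c) < nQ \<and>
     set ls \<subseteq> {0,1,3} \<and> set vs \<subseteq> {0,1,3} \<and> is_word u \<and> length vs \<le> k + 1 \<and>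
     fv = [real (fst (snd c)), enc8 ls, enc8 vs, gamma_word u])"

lemma step_rep:
  assumes wf: "tm_wf nQ delta" and rp: "rep nQ k c fv"
  shows "rep nQ (Suc k) (tm_step delta c) (PhiOf (NE1 nQ delta) (1/8) fv)"
proof -
  obtain l j r where c: "c = (l, j, r)" by (cases c)
  from rp obtain ls vs u where l: "l = pad ls" and rr: "r = pad (vs @ u)" and j: "j < nQ"
    and ls: "set ls \<subseteq> {0,1,3}" and vs: "set vs \<subseteq> {0,1,3}" and u: "is_word u"
    and len: "length vs \<le> k+1" and fv: "fv = [real j, enc8 ls, enc8 vs, gamma_word u]"
    unfolding rep_def c by auto
  have uw: "set u \<subseteq> {1,3}" using u by (simp add: is_word_def)
  define env where "env = fv @ [1/8::real]"
  have env: "env!0 = real j" "env!1 = enc8 ls" "env!2 = enc8 vs" "env!3 = gamma_word u" "env!4 = 1/8"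
    by (simp_all add: env_def fv)
  have env1': "env ! Suc 0 = enc8 ls" using env(2) by simp
  note env = env env1'
  define \<sigma> where "\<sigma> = r 0"
  have rd: "seval env readE = real \<sigma>" and sig: "\<sigma> \<in> {0,1,3}"
  proof -
    have "seval env readE = real \<sigma> \<and> \<sigma> \<in> {0,1,3}"
    proof (cases vs)
      case Nil
      show ?thesis
      proof (cases u)
        case Nil
        then show ?thesis using \<open>vs = []\<close> by (simp add: readE_def env \<sigma>_def rr pad_Nil zero_digs gamma_Nil)
      next
        case (Cons y ys)
        then have "y \<in> {1,3}" "set ys \<subseteq> {0,1,3}" using uw by auto
        then show ?thesis using \<open>vs = []\<close> Cons
          by (auto simp: readE_def env \<sigma>_def rr pad_Cons zero_digs gamma_digs)
      qed
    next
      case (Cons x xs)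
      then have "x \<in> {0,1,3}" using vs by auto
      then show ?thesis using Cons by (simp add: readE_def env \<sigma>_def rr pad_Cons enc8_digs')
    qed
    then show "seval env readE = real \<sigma>" "\<sigma> \<in> {0,1,3}" by auto
  qed
  obtain j' a m where d: "delta j \<sigma> = (j', a, m)" by (cases "delta j \<sigma>") auto
  have j': "j' < nQ" and a: "a \<in> {0,1,3}" using wf j sig d unfolding tm_wf_def
    by (metis fst_conv snd_conv)+
  define vs1 where "vs1 = (case vs of [] \<Rightarrow> [a] | _ # xs \<Rightarrow> a # xs)"
  define u1 where "u1 = (case vs of [] \<Rightarrow> tl u | _ \<Rightarrow> u)"
  have vs1: "set vs1 \<subseteq> {0,1,3}" "vs1 = a # tl vs1" "length vs1 \<le> k + 1"
    using vs a len by (auto simp: vs1_def split: list.split)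
  have u1: "is_word u1" using u by (cases u) (auto simp: u1_def is_word_def split: list.split)
  have V1: "seval env (V1E a) = enc8 vs1"
  proof (cases vs)
    case Nil then show ?thesis by (simp add: V1E_def env vs1_def zero_digs)
  next
    case (Cons x xs)
    then have "x \<in> {0,1,3}" using vs by auto
    then show ?thesis using Cons by (simp add: V1E_def env vs1_def enc8_digs'; simp add: field_simps)
  qed
  have R1: "seval env RnewE = gamma_word u1"
  proof (cases vs)
    case Nil
    show ?thesis
    proof (cases u)
      case Nil
      then show ?thesis using \<open>vs = []\<close> by (simp add: RnewE_def env u1_def zero_digs gamma_Nil)
    next
      case (Cons y ys)
      then have "y \<in> {1,3}" "set ys \<subseteq> {0,1,3}" using uw by auto
      then have "sym4 (gamma_word u) = real y" using Cons gamma_digs by simp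
      then show ?thesis using \<open>vs = []\<close> Cons
        by (simp add: RnewE_def env u1_def zero_digs gamma_Cons field_simps)
    qed
  next
    case (Cons x xs)
    then have "x \<in> {0,1,3}" using vs by auto
    then show ?thesis using Cons by (simp add: RnewE_def env u1_def enc8_digs')
  qed
  have rw: "r(0 := a) = pad (vs1 @ u1)"
    by (cases vs; cases u) (auto simp: rr vs1_def u1_def pad_Cons pad_Nil fun_eq_iff)
  have Phi: "PhiOf (NE1 nQ delta) (1/8) fv = [real j', seval env (LnewE m a), seval env (VnewE m a), gamma_word u1]"
    using tab_eval[OF env(1) j rd sig] d R1
    by (simp add: PhiOf_def NE1_def env_def[symmetric] upt_rec)
  show ?thesis
  proof (cases m)
    case MStay
    have ts: "tm_step delta c = (l, j', r(0 := a))" using d MStay by (simp add: c \<sigma>_def)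
    show ?thesis unfolding rep_def Phi ts
      apply (rule exI[of _ ls], rule exI[of _ vs1], rule exI[of _ u1]) using MStay V1 vs1 u1 j' ls l rw env(2) by simp
  next
    case MRight
    have ts: "tm_step delta c = ((\<lambda>i. if i = 0 then a else l (i - 1)), j', (\<lambda>i. r (i + 1)))"
      using d MRight by (simp add: c \<sigma>_def)
    have f1: "(\<lambda>i. if i = 0 then a else l (i - 1)) = pad (a # ls)" unfolding l pad_Cons by simp
    have f2: "(\<lambda>i. r (i + 1)) = pad (tl vs1 @ u1)"
    proof -
      have "(\<lambda>i. r (i + 1)) = (\<lambda>i. (r(0 := a)) (i + 1))" by simp
      also have "\<dots> = pad (tl (vs1 @ u1))" unfolding rw by (rule pad_shift)
      finally show ?thesis using vs1(2) by (metis list.sel(3) append_Cons)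
    qed
    have f3: "seval env (VnewE m a) = enc8 (tl vs1)"
    proof -
      have "enc8 vs1 = (real (e8 a) + enc8 (tl vs1)) / 8" using vs1(2) by (metis enc8.simps(2))
      then show ?thesis using MRight V1 by simp
    qed
    have f4: "seval env (LnewE m a) = enc8 (a # ls)" using MRight by (simp add: env field_simps)
    have f5: "set (tl vs1) \<subseteq> {0,1,3}" using vs1(1) by (cases vs1) auto
    show ?thesis unfolding rep_def Phi ts f1 f2 f3 f4
      apply (rule exI[of _ "a # ls"], rule exI[of _ "tl vs1"], rule exI[of _ u1]) using f5 vs1 u1 j' ls a len by auto
  next
    case MLeft
    define l0 where "l0 = pad ls 0"
    have l0: "l0 \<in> {0,1,3}" using ls by (cases ls) (auto simp: l0_def pad_Cons pad_Nil)
    have ts: "tm_step delta c = ((\<lambda>i. l (i + 1)), j', (\<lambda>i. if i = 0 then l 0 else (r(0 := a)) (i - 1)))"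
      using d MLeft by (simp add: c \<sigma>_def)
    have f1: "(\<lambda>i. l (i + 1)) = pad (tl ls)" unfolding l pad_shift by simp
    have f2: "(\<lambda>i. if i = 0 then l 0 else (r(0 := a)) (i - 1)) = pad ((l0 # vs1) @ u1)"
      unfolding rw l l0_def by (simp add: pad_Cons)
    have f3: "seval env (LnewE m a) = enc8 (tl ls)"
    proof (cases ls)
      case Nil then show ?thesis using MLeft by (simp add: env zero_digs)
    next
      case (Cons x xs)
      then have "x \<in> {0,1,3}" using ls by auto
      then show ?thesis using Cons MLeft by (simp add: env enc8_digs'; simp add: field_simps)
    qed
    have f4: "seval env (VnewE m a) = enc8 (l0 # vs1)"
    proof -
      have "seval env eLE = real (e8 l0)"
      proof (cases ls)
        case Nil then show ?thesis by (simp add: eLE_def env zero_digs l0_def pad_Nil e8_def)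
      next
        case (Cons x xs)
        then have "x \<in> {0,1,3}" using ls by auto
        then show ?thesis using Cons by (simp add: eLE_def env enc8_digs' l0_def pad_Cons)
      qed
      then show ?thesis using MLeft V1 by (simp add: env field_simps)
    qed
    have f5: "set (tl ls) \<subseteq> {0,1,3}" using ls by (cases ls) auto
    show ?thesis unfolding rep_def Phi ts f1 f2 f3 f4
      apply (rule exI[of _ "tl ls"], rule exI[of _ "l0 # vs1"], rule exI[of _ u1]) using f5 vs1 u1 j' ls l0 len by auto
  qed
qed


lemma rep_init: "tm_wf nQ delta \<Longrightarrow> is_word w \<Longrightarrow> rep nQ 0 (tm_init w) [0, 0, 0, gamma_word w]"
  unfolding rep_def tm_init_def tm_wf_def
  by (rule exI[of _ "[]"], rule exI[of _ "[]"], rule exI[of _ w]) (simp add: pad_Nil)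

lemma rep_iter: "tm_wf nQ delta \<Longrightarrow> is_word w \<Longrightarrow>
  rep nQ k ((tm_step delta ^^ k) (tm_init w)) ((PhiOf (NE1 nQ delta) (1/8) ^^ k) [0, 0, 0, gamma_word w])"
  by (induction k) (auto intro: rep_init step_rep)

definition NE2 :: "sexpr list" where
  "NE2 = [SSub (SMul (SConst 8) (SVar 0)) (dig8E (SVar 0)),
          SAdd (SVar 1) (SMul (SMul (sym8E (SVar 0)) (SMul (SConst 2) (SVar 3))) (SVar 2)),
          SAdd (SVar 2) (SMul (SMul (nz8E (SVar 0)) (SSub (SMul (SConst 2) (SVar 3)) (SConst 1))) (SVar 2))]"

lemma NE2_len: "length NE2 = 3" by (simp add: NE2_def)
lemma NE2_deg: "\<forall>e\<in>set NE2. sdeg {..<3} e \<le> 1" by (simp add: NE2_def)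
lemma NE2_vars: "\<forall>e\<in>set NE2. svars e \<subseteq> {..<4}" by (auto simp: NE2_def)

lemma Phi2_eval: "PhiOf NE2 (1/8) [v, ob, p] =
   [8 * v - dig8 v, ob + sym8 v * (1/4) * p, p + nz8 v * (1/4 - 1) * p]"
  by (simp add: PhiOf_def NE2_def upt_rec)

lemma Phi2_fix: "(PhiOf NE2 (1/8) ^^ k) [0, ob, p] = [0, ob, p]"
  by (induction k) (simp_all add: Phi2_eval zero_digs)

lemma Phi2_conv: "set vs \<subseteq> {0,1,3} \<Longrightarrow> length vs \<le> k \<Longrightarrow>
  (PhiOf NE2 (1/8) ^^ k) [enc8 vs, ob, p] = [0, ob + p * gamma_word vs, p * (1/4) ^ length vs]"
proof (induction vs arbitrary: k ob p)
  case Nil then show ?case by (simp add: Phi2_fix gamma_Nil)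
next
  case (Cons x xs)
  then obtain k' where k: "k = Suc k'" "length xs \<le> k'" by (cases k) auto
  have x: "x \<in> {0,1,3}" using Cons by auto
  have "PhiOf NE2 (1/8) [enc8 (x # xs), ob, p] = [enc8 xs, ob + real x * (1/4) * p, p * (1/4)]"
    using x enc8_digs[OF x, of xs] unfolding Phi2_eval by (simp del: enc8.simps; simp add: field_simps)
  then show ?case using Cons k
    by (simp add: funpow_Suc_right gamma_Cons field_simps del: funpow.simps)
qed


definition compf :: "pfun \<Rightarrow> pfun list \<Rightarrow> pfun" where
  "compf f gs = (\<lambda>xs. case those (map (\<lambda>g. g xs) gs) of None \<Rightarrow> None | Some vs \<Rightarrow> f vs)"

lemma LDL_comp': "(m, f) \<in> LDL \<Longrightarrow> length gs = m \<Longrightarrow> \<forall>g\<in>set gs. (n, g) \<in> LDL \<Longrightarrow> (n, compf f gs) \<in> LDL"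
  unfolding compf_def by (rule LDL.comp)

lemma LDL_const1: "(n, \<lambda>_. Some 1) \<in> LDL"
proof -
  have "(n, compf (\<lambda>xs. Some 1) []) \<in> LDL" by (rule LDL_comp'[OF LDL.one]) auto
  moreover have "compf (\<lambda>xs. Some 1) [] = (\<lambda>_. Some 1)" by (simp add: compf_def fun_eq_iff)
  ultimately show ?thesis by simp
qed

lemma LDL_const0: "(n, \<lambda>_. Some 0) \<in> LDL"
proof -
  have "(n, compf (\<lambda>xs. Some 0) []) \<in> LDL" by (rule LDL_comp'[OF LDL.zero]) auto
  moreover have "compf (\<lambda>xs. Some 0) [] = (\<lambda>_. Some 0)" by (simp add: compf_def fun_eq_iff)
  ultimately show ?thesis by simp
qed

lemma LDL_half_const: "(n, \<lambda>_. Some c) \<in> LDL \<Longrightarrow> (n, \<lambda>_. Some (c / 2)) \<in> LDL"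
proof -
  assume a: "(n, \<lambda>_. Some c) \<in> LDL"
  have "(n, compf (\<lambda>xs. Some (xs ! 0 / 2)) [\<lambda>_. Some c]) \<in> LDL" by (rule LDL_comp'[OF LDL.half]) (auto simp: a)
  moreover have "compf (\<lambda>xs. Some (xs ! 0 / 2)) [\<lambda>_. Some c] = (\<lambda>_. Some (c / 2))" by (simp add: compf_def fun_eq_iff)
  ultimately show ?thesis by simp
qed

lemma LDL_c8: "(n, \<lambda>_. Some (1/8)) \<in> LDL"
  using LDL_half_const[OF LDL_half_const[OF LDL_half_const[OF LDL_const1]]] by simp

definition H :: "pfun list" where "H = [\<lambda>_. Some (1/8)]"
definition G1 :: "pfun list" where "G1 = [\<lambda>_. Some 0, \<lambda>_. Some 0, \<lambda>_. Some 0, \<lambda>xs. Some (xs ! 0)]"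
definition G2 :: "pfun list" where "G2 = [\<lambda>xs. Some (xs ! 0), \<lambda>_. Some 0, \<lambda>_. Some 1]"

lemma LDL_P: "i < 4 \<Longrightarrow> (2, ode_sol G1 H (mkU (NE1 nQ delta)) i) \<in> LDL"
proof -
  assume i: "i < 4"
  have "(Suc 1, ode_sol G1 H (mkU (NE1 nQ delta)) i) \<in> LDL"
  proof (rule LDL.ode)
    show "0 < length G1" by (simp add: G1_def)
    show "\<forall>g\<in>set G1. (1, g) \<in> LDL" by (auto simp: G1_def intro: LDL_const0 LDL.proj)
    show "\<forall>h\<in>set H. (Suc 1, h) \<in> LDL" by (auto simp: H_def intro: LDL_c8)
    show "length (mkU (NE1 nQ delta)) = length G1" by (simp add: mkU_def NE1_len G1_def)
    show "i < length G1" using i by (simp add: G1_def)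
    have el: "\<forall>u\<in>set (mkU (NE1 nQ delta)). ess_linear (length (NE1 nQ delta)) u"
      by (rule mkU_el) (unfold NE1_len, rule NE1_deg)
    have sv: "\<forall>u\<in>set (mkU (NE1 nQ delta)). svars u \<subseteq> {..<7}"
      proof (rule mkU_vars)
      show "\<forall>e\<in>set (NE1 nQ delta). svars e \<subseteq> {..<7}"
      proof (intro ballI subsetI)
        fix e x assume "e \<in> set (NE1 nQ delta)" "x \<in> svars e"
        then have "x < 5" using NE1_vars by blast
        then show "x \<in> {..<7}" by simp
      qed
    qed (simp add: NE1_len)
    show "\<forall>u\<in>set (mkU (NE1 nQ delta)). ess_linear (length G1) u \<and> svars u \<subseteq> {..<length G1 + length H + 1 + 1}"
    proof -
      have g: "length G1 + length H + 1 + 1 = 7" "length G1 = length (NE1 nQ delta)" by (simp_all add: G1_def H_def NE1_len)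
      show ?thesis unfolding g(1) unfolding g(2) using el sv by blast
    qed
  qed
  then show ?thesis by (simp add: numeral_2_eq_2)
qed

lemma LDL_C: "i < 3 \<Longrightarrow> (2, ode_sol G2 H (mkU NE2) i) \<in> LDL"
proof -
  assume i: "i < 3"
  have "(Suc 1, ode_sol G2 H (mkU NE2) i) \<in> LDL"
  proof (rule LDL.ode)
    show "0 < length G2" by (simp add: G2_def)
    show "\<forall>g\<in>set G2. (1, g) \<in> LDL" by (auto simp: G2_def intro: LDL_const0 LDL_const1 LDL.proj)
    show "\<forall>h\<in>set H. (Suc 1, h) \<in> LDL" by (auto simp: H_def intro: LDL_c8)
    show "length (mkU NE2) = length G2" by (simp add: mkU_def NE2_len G2_def)
    show "i < length G2" using i by (simp add: G2_def)
    have el: "\<forall>u\<in>set (mkU NE2). ess_linear (length NE2) u"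
      by (rule mkU_el) (unfold NE2_len, rule NE2_deg)
    have sv: "\<forall>u\<in>set (mkU NE2). svars u \<subseteq> {..<6}"
      proof (rule mkU_vars)
      show "\<forall>e\<in>set NE2. svars e \<subseteq> {..<6}"
      proof (intro ballI subsetI)
        fix e x assume "e \<in> set NE2" "x \<in> svars e"
        then have "x < 4" using NE2_vars by blast
        then show "x \<in> {..<6}" by simp
      qed
    qed (simp add: NE2_len)
    show "\<forall>u\<in>set (mkU NE2). ess_linear (length G2) u \<and> svars u \<subseteq> {..<length G2 + length H + 1 + 1}"
    proof -
      have g: "length G2 + length H + 1 + 1 = 6" "length G2 = length NE2" by (simp_all add: G2_def H_def NE2_len)
      show ?thesis unfolding g(1) unfolding g(2) using el sv by blast
    qed
  qed
  then show ?thesis by (simp add: numeral_2_eq_2)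
qed

lemma ode_sol_nat: "ode_sol gs hs us i (real N # ys) = map_option (\<lambda>v. v ! i) (ode_vec gs hs us N ys)"
  by (simp add: ode_sol_def is_nat_real_def)

lemma P_eval: "ode_vec G1 H (mkU (NE1 nQ delta)) (2 ^ T) [y] = Some ((PhiOf (NE1 nQ delta) (1/8) ^^ T) [0, 0, 0, y])"
proof -
  have "ode_vec G1 H (mkU (NE1 nQ delta)) (2 ^ T) [y] = Some ((PhiOf (NE1 nQ delta) (1/8) ^^ (blen (2 ^ T) - 1)) [0, 0, 0, y])
     \<and> length ((PhiOf (NE1 nQ delta) (1/8) ^^ (blen (2 ^ T) - 1)) [0, 0, 0, y]) = length G1"
  proof (rule ode_vec_iter)
    show "ode_vec G1 H (mkU (NE1 nQ delta)) 0 [y] = Some [0, 0, 0, y]" by (simp add: G1_def)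
    show "length [0, 0, 0, y] = length G1" by (simp add: G1_def)
    show "\<And>t. those (map (\<lambda>h. h (real t # [y])) H) = Some [1/8]" by (simp add: H_def)
    show "length (PhiOf (NE1 nQ delta) (1/8) fv) = length G1" for fv by (simp add: PhiOf_def NE1_len G1_def)
    fix t and fv :: "real list"
    assume "length fv = length G1"
    then have l: "length fv = length (NE1 nQ delta)" by (simp add: G1_def NE1_len)
    have eq: "length G1 = length (NE1 nQ delta)" by (simp add: G1_def NE1_len)
    show "map (\<lambda>i. fv ! i + seval (fv @ [1/8] @ [real t] @ [y]) (mkU (NE1 nQ delta) ! i)) [0..<length G1]
       = PhiOf (NE1 nQ delta) (1/8) fv" unfolding eq
      by (rule phi_generic[OF _ l]) (use NE1_vars in \<open>auto simp: NE1_len\<close>)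
  qed
  then show ?thesis by (simp add: blen_pow)
qed

lemma C_eval: "ode_vec G2 H (mkU NE2) (2 ^ T) [y] = Some ((PhiOf NE2 (1/8) ^^ T) [y, 0, 1])"
proof -
  have "ode_vec G2 H (mkU NE2) (2 ^ T) [y] = Some ((PhiOf NE2 (1/8) ^^ (blen (2 ^ T) - 1)) [y, 0, 1])
     \<and> length ((PhiOf NE2 (1/8) ^^ (blen (2 ^ T) - 1)) [y, 0, 1]) = length G2"
  proof (rule ode_vec_iter)
    show "ode_vec G2 H (mkU NE2) 0 [y] = Some [y, 0, 1]" by (simp add: G2_def)
    show "length [y, 0, 1] = length G2" by (simp add: G2_def)
    show "\<And>t. those (map (\<lambda>h. h (real t # [y])) H) = Some [1/8]" by (simp add: H_def)
    show "length (PhiOf NE2 (1/8) fv) = length G2" for fv by (simp add: PhiOf_def NE2_len G2_def)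
    fix t and fv :: "real list"
    assume "length fv = length G2"
    then have l: "length fv = length NE2" by (simp add: G2_def NE2_len)
    have eq: "length G2 = length NE2" by (simp add: G2_def NE2_len)
    show "map (\<lambda>i. fv ! i + seval (fv @ [1/8] @ [real t] @ [y]) (mkU NE2 ! i)) [0..<length G2]
       = PhiOf NE2 (1/8) fv" unfolding eq
      by (rule phi_generic[OF _ l]) (use NE2_vars in \<open>auto simp: NE2_len\<close>)
  qed
  then show ?thesis by (simp add: blen_pow)
qed


lemma compf2: "p xs = Some a \<Longrightarrow> q xs = Some b \<Longrightarrow> compf f [p, q] xs = f [a, b]"
  by (simp add: compf_def)

theorem mainTheorem9:
  fixes nQ :: nat and delta :: "nat \<Rightarrow> nat \<Rightarrow> nat \<times> nat \<times> move"
    and f :: "nat list \<Rightarrow> nat list" and T :: "nat \<Rightarrow> nat"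
  assumes "tm_wf nQ delta"
    and "tm_computes delta f T"
  shows "\<exists>F. (2, F) \<in> LDL \<and>
           (\<forall>w. is_word w \<longrightarrow>
              F [real (2 ^ T (length w)), gamma_word w] = Some (gamma_word (f w)))"
proof -
  define P where "P i = ode_sol G1 H (mkU (NE1 nQ delta)) i" for i
  define C where "C i = ode_sol G2 H (mkU NE2) i" for i
  define addf :: pfun where "addf = (\<lambda>xs. Some (xs ! 0 + xs ! 1))"
  define mulf :: pfun where "mulf = (\<lambda>xs. Some (xs ! 0 * xs ! 1))"
  define pr0 :: pfun where "pr0 = (\<lambda>xs. Some (xs ! 0))"
  define TT where "TT = compf addf [pr0, pr0]"
  define F where "F = compf addf [compf (C 1) [TT, P 2], compf mulf [compf (C 2) [TT, P 2], P 3]]"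
  have La: "(2, addf) \<in> LDL" unfolding addf_def by (rule LDL.add)
  have Lm: "(2, mulf) \<in> LDL" unfolding mulf_def by (rule LDL.mul)
  have Lp: "(2, pr0) \<in> LDL" unfolding pr0_def by (rule LDL.proj) simp
  have LT: "(2, TT) \<in> LDL" unfolding TT_def by (rule LDL_comp'[OF La]) (auto simp: Lp)
  have LP: "(2, P 2) \<in> LDL" "(2, P 3) \<in> LDL" unfolding P_def by (auto intro: LDL_P)
  have LC: "(2, C 1) \<in> LDL" "(2, C 2) \<in> LDL" unfolding C_def by (auto intro: LDL_C)
  have L1: "(2, compf (C 1) [TT, P 2]) \<in> LDL" by (rule LDL_comp'[OF LC(1)]) (auto simp: LT LP)
  have L2: "(2, compf (C 2) [TT, P 2]) \<in> LDL" by (rule LDL_comp'[OF LC(2)]) (auto simp: LT LP)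
  have L3: "(2, compf mulf [compf (C 2) [TT, P 2], P 3]) \<in> LDL" by (rule LDL_comp'[OF Lm]) (auto simp: L2 LP)
  have LF: "(2, F) \<in> LDL" unfolding F_def
  proof (rule LDL_comp'[OF La])
    show "\<forall>g\<in>set [compf (C 1) [TT, P 2], compf mulf [compf (C 2) [TT, P 2], P 3]]. (2, g) \<in> LDL"
      using L1 L3 by (intro ballI) (simp only: list.set insert_iff empty_iff, blast)
  qed simp
  have val: "F [real (2 ^ T (length w)), gamma_word w] = Some (gamma_word (f w))" if w: "is_word w" for w
  proof -
    define n where "n = T (length w)"
    define y where "y = gamma_word w"
    define vT where "vT = (PhiOf (NE1 nQ delta) (1/8) ^^ n) [0, 0, 0, y]"
    define c where "c = (tm_step delta ^^ n) (tm_init w)"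
    have rp: "rep nQ n c vT" unfolding c_def vT_def y_def using rep_iter[OF assms(1) w] .
    then obtain ls vs u where cr: "snd (snd c) = pad (vs @ u)" and vs: "set vs \<subseteq> {0,1,3}"
      and len: "length vs \<le> n + 1" and vT: "vT = [real (fst (snd c)), enc8 ls, enc8 vs, gamma_word u]"
      unfolding rep_def by blast
    have out: "snd (snd c) = pad (f w)" using assms(2) w unfolding tm_computes_def c_def n_def Let_def by blast
    have Pv: "P i [real (2 ^ n), y] = Some (vT ! i)" for i
      unfolding P_def vT_def using ode_sol_nat[of G1 H "mkU (NE1 nQ delta)" i "2 ^ n" "[y]"] P_eval[of nQ delta n y]
      by simp
    have Tv: "TT [real (2 ^ n), y] = Some (real (2 ^ Suc n))"
      by (simp add: TT_def compf_def addf_def pr0_def)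
    have Cv: "C i [real (2 ^ Suc n), enc8 vs] = Some ([0, 0 + 1 * gamma_word vs, 1 * (1/4) ^ length vs] ! i)" for i
    proof -
      have "C i [real (2 ^ Suc n), enc8 vs] = Some (((PhiOf NE2 (1/8)) ^^ Suc n) [enc8 vs, 0, 1] ! i)"
        unfolding C_def using ode_sol_nat[of G2 H "mkU NE2" i "2 ^ Suc n" "[enc8 vs]"] C_eval[of "Suc n" "enc8 vs"]
        by simp
      also have "((PhiOf NE2 (1/8)) ^^ Suc n) [enc8 vs, 0, 1] = [0, 0 + 1 * gamma_word vs, 1 * (1/4) ^ length vs]"
        using Phi2_conv[OF vs, of "Suc n" 0 1] len by simp
      finally show ?thesis .
    qed
    have P2: "P 2 [real (2 ^ n), y] = Some (enc8 vs)" and P3: "P 3 [real (2 ^ n), y] = Some (gamma_word u)"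
      using Pv[of 2] Pv[of 3] vT by simp_all
    have c1: "compf (C 1) [TT, P 2] [real (2 ^ n), y] = Some (gamma_word vs)"
      using compf2[of TT "[real (2 ^ n), y]" _ "P 2" _ "C 1", OF Tv P2] Cv[of 1] by simp
    have c2: "compf (C 2) [TT, P 2] [real (2 ^ n), y] = Some ((1/4) ^ length vs)"
      using compf2[of TT "[real (2 ^ n), y]" _ "P 2" _ "C 2", OF Tv P2] Cv[of 2] by simp
    have c3: "compf mulf [compf (C 2) [TT, P 2], P 3] [real (2 ^ n), y] = Some ((1/4) ^ length vs * gamma_word u)"
      using compf2[of "compf (C 2) [TT, P 2]" "[real (2 ^ n), y]" _ "P 3" _ mulf, OF c2 P3] by (simp add: mulf_def)
    have "F [real (2 ^ n), y] = Some (gamma_word vs + (1/4) ^ length vs * gamma_word u)"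
      unfolding F_def using compf2[of "compf (C 1) [TT, P 2]" "[real (2 ^ n), y]" _ "compf mulf [compf (C 2) [TT, P 2], P 3]" _ addf, OF c1 c3] by (simp add: addf_def)
    also have "gamma_word vs + (1/4) ^ length vs * gamma_word u = gamma_word (vs @ u)"
      by (simp add: gamma_append)
    also have "gamma_word (vs @ u) = gamma_word (f w)"
      by (rule gamma_pad) (use cr out in simp)
    finally show ?thesis unfolding n_def y_def .
  qed
  show ?thesis using LF val by blast
qed

end
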